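(* Let $p$ be a prime, $n\ge2$, let $f,g:\mathbb{F}_p^n\to\mathbb{F}_p$ and let $\mathcal{E}=\{e_1,\dots,e_n\}$ be a basis of $\mathbb{F}_p^n$ over $\mathbb{F}_p$ with coordinates $x_1,\dots,x_n$ relative to $\mathcal{E}$. Suppose that for some $i\neq j$ in $\{1,\dots,n\}$, $\Delta_{e_i}f(x)=\Delta_{e_j}g(x)$ for all $x$. Then \[\deg_{x_j}(\Delta_{e_i}f)=\deg_{x_j}(\Delta_{e_j}g)<p-1\quad\text{and}\quad \deg_{x_i}(\Delta_{e_j}g)=\deg_{x_i}(\Delta_{e_i}f)<p-1.\]
   Context: $\Delta_aF(x)=F(x+a)-F(x)$. Writing $x=\sum_k x_ke_k$, every function $h:\mathbb{F}_p^n\to\mathbb{F}_p$ has a unique algebraic normal form $h=\sum_{(i_1,\dots,i_n)\in\{0,\dots,p-1\}^n}h_{(i_1,\dots,i_n)}\prod_k x_k^{i_k}$ with coefficients in $\mathbb{F}_p$, and $\deg_{x_k}(h)=\max\{i_k \mid h_{(i_1,\dots,i_n)}\ne0\}$. *)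

theory Defs
  imports Main "HOL-Computational_Algebra.Primes" "HOL-Library.Cardinality"
begin

text \<open>Points of F_p^n are modelled as functions 'n \<Rightarrow> 'a, where 'n is a finite
 index type with CARD('n) = n and 'a is a finite field with CARD('a) = p prime.\<close>

definition Delta :: "('n \<Rightarrow> 'a::ab_group_add) \<Rightarrow> (('n \<Rightarrow> 'a) \<Rightarrow> 'b::ab_group_add) \<Rightarrow> ('n \<Rightarrow> 'a) \<Rightarrow> 'b" where
  "Delta a F x = F (\<lambda>k. x k + a k) - F x"

definition lincomb :: "('n::finite \<Rightarrow> 'n \<Rightarrow> 'a::field) \<Rightarrow> ('n \<Rightarrow> 'a) \<Rightarrow> ('n \<Rightarrow> 'a)" where
  "lincomb e c = (\<lambda>m. \<Sum>l\<in>UNIV. c l * e l m)"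

definition is_basis :: "('n::finite \<Rightarrow> 'n \<Rightarrow> 'a::field) \<Rightarrow> bool" where
  "is_basis e \<longleftrightarrow> bij (lincomb e)"

definition anf_exps :: "'a::finite itself \<Rightarrow> ('n \<Rightarrow> nat) set" where
  "anf_exps _ = {i. \<forall>k. i k < CARD('a)}"

definition is_anf :: "('n::finite \<Rightarrow> 'n \<Rightarrow> 'a::{field,finite}) \<Rightarrow> (('n \<Rightarrow> 'a) \<Rightarrow> 'a)
    \<Rightarrow> (('n \<Rightarrow> nat) \<Rightarrow> 'a) \<Rightarrow> bool" where
  "is_anf e h a \<longleftrightarrow> (\<forall>i. i \<notin> (anf_exps TYPE('a) :: ('n \<Rightarrow> nat) set) \<longrightarrow> a i = 0) \<and>
     (\<forall>c. h (lincomb e c) = (\<Sum>i\<in>(anf_exps TYPE('a) :: ('n \<Rightarrow> nat) set). a i * (\<Prod>k\<in>UNIV. c k ^ i k)))"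

definition anf_coeff :: "('n::finite \<Rightarrow> 'n \<Rightarrow> 'a::{field,finite}) \<Rightarrow> (('n \<Rightarrow> 'a) \<Rightarrow> 'a)
    \<Rightarrow> ('n \<Rightarrow> nat) \<Rightarrow> 'a" where
  "anf_coeff e h = (THE a. is_anf e h a)"

definition deg_var :: "('n::finite \<Rightarrow> 'n \<Rightarrow> 'a::{field,finite}) \<Rightarrow> (('n \<Rightarrow> 'a) \<Rightarrow> 'a) \<Rightarrow> 'n \<Rightarrow> nat" where
  "deg_var e h k = Max (insert 0 {i k | i. anf_coeff e h i \<noteq> 0})"

end

theory Submission
  imports Defs "HOL-Computational_Algebra.Polynomial" "HOL-Library.FuncSet"
begin

lemma ff_card0: "of_nat CARD('a::{field,finite}) = (0::'a)"
proof -
  have "(\<Sum>x\<in>(UNIV::'a set). x + 1) = (\<Sum>x\<in>UNIV. x)"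
    by (rule sum.reindex_bij_witness[of _ "\<lambda>x. x - 1" "\<lambda>x. x + 1"]) auto
  then have "(\<Sum>x\<in>(UNIV::'a set). (1::'a)) = 0"
    by (simp add: sum.distrib)
  then show ?thesis by simp
qed

lemma ff_fermat:
  fixes t :: "'a::{field,finite}"
  assumes "t \<noteq> 0" shows "t ^ (CARD('a) - 1) = 1"
proof -
  let ?N = "UNIV - {0::'a}"
  have "(\<Prod>x\<in>?N. t * x) = (\<Prod>x\<in>?N. x)"
    by (rule prod.reindex_bij_witness[of _ "\<lambda>x. x / t" "\<lambda>x. t * x"]) (use assms in auto)
  then have "t ^ card ?N * (\<Prod>x\<in>?N. x) = (\<Prod>x\<in>?N. x)"
    by (simp add: prod.distrib)
  moreover have "(\<Prod>x\<in>?N. x) \<noteq> 0" by simp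
  moreover have "card ?N = CARD('a) - 1" by (simp add: card_Diff_subset)
  ultimately show ?thesis by simp
qed

lemma ff_sum_pow_small:
  assumes "0 < s" "s < CARD('a::{field,finite}) - 1"
  shows "(\<Sum>t\<in>(UNIV::'a set). t ^ s) = 0"
proof -
  let ?q = "monom (1::'a) s - 1"
  have q0: "?q \<noteq> 0"
  proof
    assume "?q = 0"
    then have "coeff ?q s = 0" by simp
    then show False using assms by (simp add: coeff_monom)
  qed
  have dq: "degree ?q \<le> s"
    by (rule degree_diff_le) (auto simp: degree_monom_le)
  have "card {x. poly ?q x = 0} \<le> s" using card_poly_roots_bound[OF q0] dq by linarith
  moreover have "{x. poly ?q x = 0} = {x. x ^ s = 1}" by (auto simp: poly_monom)
  ultimately have c: "card {x::'a. x ^ s = 1} \<le> s" by simp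
  have "\<exists>l::'a. l \<noteq> 0 \<and> l ^ s \<noteq> 1"
  proof (rule ccontr)
    assume "\<not> ?thesis"
    then have "UNIV - {0} \<subseteq> {x::'a. x ^ s = 1}" by auto
    then have "card (UNIV - {0::'a}) \<le> card {x::'a. x ^ s = 1}" by (intro card_mono) auto
    moreover have "card (UNIV - {0::'a}) = CARD('a) - 1" by (simp add: card_Diff_subset)
    ultimately show False using c assms by linarith
  qed
  then obtain l :: 'a where l: "l \<noteq> 0" "l ^ s \<noteq> 1" by blast
  have "(\<Sum>t\<in>(UNIV::'a set). (l * t) ^ s) = (\<Sum>t\<in>UNIV. t ^ s)"
    by (rule sum.reindex_bij_witness[of _ "\<lambda>x. x / l" "\<lambda>x. l * x"]) (use l in auto)
  then have "l ^ s * (\<Sum>t\<in>(UNIV::'a set). t ^ s) = (\<Sum>t\<in>UNIV. t ^ s)"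
    by (simp add: power_mult_distrib sum_distrib_left)
  then have "(l ^ s - 1) * (\<Sum>t\<in>(UNIV::'a set). t ^ s) = 0" by (simp add: algebra_simps)
  then show ?thesis using l by simp
qed

lemma ff_card_ge2: "CARD('a::{field,finite}) \<ge> 2"
proof -
  have "{0::'a, 1} \<subseteq> UNIV" by simp
  then have "card {0::'a, 1} \<le> CARD('a)" by (intro card_mono) auto
  then show ?thesis by simp
qed

lemma ff_sum_pow_top:
  "(\<Sum>t\<in>(UNIV::'a::{field,finite} set). t ^ (CARD('a) - 1)) = -1"
proof -
  have p: "CARD('a) - 1 > 0" using ff_card_ge2[where 'a='a] by linarith
  have "(\<Sum>t\<in>(UNIV::'a set). t ^ (CARD('a) - 1)) = (\<Sum>t::'a\<in>UNIV. if t = 0 then 0 else 1)"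
    using p ff_fermat[where 'a='a] by (intro sum.cong refl) auto
  also have "\<dots> = of_nat (card (UNIV - {0::'a}))"
    by (simp add: sum.If_cases Diff_eq Compl_eq)
  also have "card (UNIV - {0::'a}) = CARD('a) - 1" by (simp add: card_Diff_subset)
  also have "(of_nat (CARD('a) - 1) :: 'a) = of_nat CARD('a) - 1"
    using ff_card_ge2[where 'a='a] by (simp add: of_nat_diff)
  finally show ?thesis by (simp add: ff_card0)
qed

lemma ff_sum_pow_lt:
  assumes "s < CARD('a::{field,finite}) - 1"
  shows "(\<Sum>t\<in>(UNIV::'a set). t ^ s) = 0"
proof (cases "s = 0")
  case True then show ?thesis using ff_card0[where 'a='a] by simp
next
  case False then show ?thesis using ff_sum_pow_small[of s] assms by simp
qed

lemma ff_pow_shift: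
  fixes t :: "'a::{field,finite}"
  assumes "0 < k" shows "t ^ (k + (CARD('a) - 1)) = t ^ k"
proof (cases "t = 0")
  case True then show ?thesis using assms ff_card_ge2[where 'a='a] by (simp add: power_0_left)
next
  case False
  have "t ^ (k + (CARD('a) - 1)) = t ^ k * t ^ (CARD('a) - 1)" by (rule power_add)
  then show ?thesis using ff_fermat[OF False] by simp
qed

definition wt :: "nat \<Rightarrow> 'a::{field,finite} \<Rightarrow> 'a" where
  "wt r t = (if r = 0 then 1 - t ^ (CARD('a) - 1) else - (t ^ (CARD('a) - 1 - r)))"

lemma ff_onevar:
  assumes "m < CARD('a::{field,finite})" "r < CARD('a)"
  shows "(\<Sum>t\<in>(UNIV::'a set). t ^ m * wt r t) = (if m = r then 1 else 0)"
proof -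
  let ?q = "CARD('a) - 1"
  have q: "?q > 0" using ff_card_ge2[where 'a='a] by linarith
  show ?thesis
  proof (cases "r = 0")
    case True
    have "(\<Sum>t\<in>(UNIV::'a set). t ^ m * wt r t) = (\<Sum>t\<in>(UNIV::'a set). t ^ m) - (\<Sum>t\<in>(UNIV::'a set). t ^ m * t ^ ?q)"
      using True by (simp add: wt_def algebra_simps sum_subtractf)
    also have "\<dots> = (if m = r then 1 else 0)"
    proof (cases "m = 0")
      case True then show ?thesis using \<open>r = 0\<close> ff_sum_pow_top[where 'a='a] ff_sum_pow_lt[of 0, where 'a='a] q by simp
    next
      case False
      then have "\<And>t::'a. t ^ m * t ^ ?q = t ^ m" using ff_pow_shift[of m, where 'a='a]
        by (simp only: power_add[symmetric])
      then have "(\<Sum>t\<in>(UNIV::'a set). t ^ m * t ^ ?q) = (\<Sum>t\<in>(UNIV::'a set). t ^ m)"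
        by (intro sum.cong refl) blast
      then show ?thesis using \<open>r = 0\<close> False by (simp only:) simp
    qed
    finally show ?thesis .
  next
    case rpos: False
    have "(\<Sum>t\<in>(UNIV::'a set). t ^ m * wt r t) = - (\<Sum>t\<in>(UNIV::'a set). t ^ (m + ?q - r))"
      using rpos assms by (simp add: wt_def power_add[symmetric] sum_negf)
    also have "\<dots> = (if m = r then 1 else 0)"
    proof (cases "m < r")
      case True then show ?thesis using ff_sum_pow_lt[of "m + ?q - r", where 'a='a] assms rpos by simp
    next
      case nl: False
      show ?thesis
      proof (cases "m = r")
        case True then show ?thesis using ff_sum_pow_top[where 'a='a] by simp
      next
        case False
        then have "m + ?q - r = (m - r) + ?q" "0 < m - r" using nl by auto
        then have "(\<Sum>t\<in>(UNIV::'a set). t ^ (m + ?q - r)) = (\<Sum>t\<in>(UNIV::'a set). t ^ (m - r))"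
          using ff_pow_shift[of "m - r", where 'a='a] by simp
        also have "\<dots> = 0" using ff_sum_pow_lt[of "m - r", where 'a='a] assms False nl rpos by simp
        finally show ?thesis using False by simp
      qed
    qed
    finally show ?thesis .
  qed
qed

definition Wm :: "('n::finite \<Rightarrow> nat) \<Rightarrow> ('n \<Rightarrow> 'a::{field,finite}) \<Rightarrow> 'a" where
  "Wm r c = (\<Prod>k\<in>UNIV. wt (r k) (c k))"

lemma anf_exps_PiE: "(anf_exps TYPE('a::{field,finite}) :: ('n::finite \<Rightarrow> nat) set) = PiE UNIV (\<lambda>_. {..<CARD('a)})"
  by (auto simp: anf_exps_def PiE_UNIV_domain)

lemma finite_anf_exps: "finite (anf_exps TYPE('a::{field,finite}) :: ('n::finite \<Rightarrow> nat) set)"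
  by (simp add: anf_exps_PiE finite_PiE)

lemma card_anf_exps: "card (anf_exps TYPE('a::{field,finite}) :: ('n::finite \<Rightarrow> nat) set) = CARD('a) ^ CARD('n)"
  by (simp add: anf_exps_PiE card_PiE)

lemma ff_multi:
  fixes m r :: "'n::finite \<Rightarrow> nat"
  assumes "m \<in> anf_exps TYPE('a::{field,finite})" "r \<in> anf_exps TYPE('a)"
  shows "(\<Sum>c\<in>(UNIV::('n \<Rightarrow> 'a) set). (\<Prod>k\<in>UNIV. c k ^ m k) * Wm r c) = (if m = r then 1 else 0)"
proof -
  have "(\<Sum>c\<in>(UNIV::('n \<Rightarrow> 'a) set). (\<Prod>k\<in>UNIV. c k ^ m k) * Wm r c)
      = (\<Sum>c\<in>PiE UNIV (\<lambda>_. UNIV::'a set). \<Prod>k\<in>UNIV. c k ^ m k * wt (r k) (c k))"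
    by (simp add: Wm_def prod.distrib)
  also have "\<dots> = (\<Prod>k\<in>UNIV. \<Sum>t\<in>(UNIV::'a set). t ^ m k * wt (r k) t)"
    by (rule prod_sum_PiE[symmetric]) auto
  also have "\<dots> = (\<Prod>k\<in>UNIV. if m k = r k then 1 else 0)"
    using assms by (intro prod.cong refl ff_onevar) (auto simp: anf_exps_def)
  also have "\<dots> = (if m = r then 1 else 0)"
  proof (cases "m = r")
    case True then show ?thesis by simp
  next
    case False
    then obtain k where "m k \<noteq> r k" by auto
    then show ?thesis using False by (intro trans[OF prod_zero]) auto
  qed
  finally show ?thesis .
qed

lemma coeff_formula:
  fixes a :: "('n::finite \<Rightarrow> nat) \<Rightarrow> 'a::{field,finite}"
  assumes "\<forall>c. phi c = (\<Sum>m\<in>anf_exps TYPE('a). a m * (\<Prod>k\<in>UNIV. c k ^ m k))"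
    and "r \<in> anf_exps TYPE('a)"
  shows "a r = (\<Sum>c\<in>UNIV. phi c * Wm r c)"
proof -
  have "(\<Sum>c\<in>UNIV. phi c * Wm r c) = (\<Sum>c\<in>UNIV. \<Sum>m\<in>anf_exps TYPE('a). a m * ((\<Prod>k\<in>UNIV. c k ^ m k) * Wm r c))"
    using assms(1) by (simp add: sum_distrib_right mult.assoc)
  also have "\<dots> = (\<Sum>m\<in>anf_exps TYPE('a). a m * (\<Sum>c\<in>UNIV. (\<Prod>k\<in>UNIV. c k ^ m k) * Wm r c))"
    by (subst sum.swap) (simp add: sum_distrib_left)
  also have "\<dots> = (\<Sum>m\<in>anf_exps TYPE('a). a m * (if m = r then 1 else 0))"
    using assms(2) by (intro sum.cong refl) (simp add: ff_multi)
  also have "\<dots> = a r" using assms(2) finite_anf_exps[where 'a='a and 'n='n] by (simp add: if_distrib cong: if_cong)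
  finally show ?thesis by simp
qed

lemma anf_unique:
  fixes e :: "'n::finite \<Rightarrow> 'n \<Rightarrow> 'a::{field,finite}"
  assumes "is_anf e h a" "is_anf e h b" shows "a = b"
proof
  fix r
  show "a r = b r"
  proof (cases "r \<in> anf_exps TYPE('a)")
    case True
    have "a r = (\<Sum>c\<in>UNIV. h (lincomb e c) * Wm r c)"
      using assms(1) True by (intro coeff_formula) (auto simp: is_anf_def)
    moreover have "b r = (\<Sum>c\<in>UNIV. h (lincomb e c) * Wm r c)"
      using assms(2) True by (intro coeff_formula) (auto simp: is_anf_def)
    ultimately show ?thesis by simp
  next
    case False then show ?thesis using assms by (simp add: is_anf_def)
  qed
qed

lemma anf_exists:
  fixes e :: "'n::finite \<Rightarrow> 'n \<Rightarrow> 'a::{field,finite}" and h :: "('n \<Rightarrow> 'a) \<Rightarrow> 'a"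
  shows "\<exists>a. is_anf e h a"
proof -
  let ?S = "anf_exps TYPE('a) :: ('n \<Rightarrow> nat) set"
  let ?P = "PiE ?S (\<lambda>_. UNIV::'a set)"
  define Psi :: "(('n \<Rightarrow> nat) \<Rightarrow> 'a) \<Rightarrow> ('n \<Rightarrow> 'a) \<Rightarrow> 'a" where
    "Psi = (\<lambda>g c. \<Sum>m\<in>?S. g m * (\<Prod>k\<in>UNIV. c k ^ m k))"
  have inj: "inj_on Psi ?P"
  proof (rule inj_onI)
    fix g g' assume g: "g \<in> ?P" "g' \<in> ?P" and eq: "Psi g = Psi g'"
    show "g = g'"
    proof (rule PiE_ext[OF g])
      fix r assume r: "r \<in> ?S"
      have "g r = (\<Sum>c\<in>UNIV. Psi g c * Wm r c)"
        by (rule coeff_formula[OF _ r]) (simp add: Psi_def)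
      moreover have "g' r = (\<Sum>c\<in>UNIV. Psi g' c * Wm r c)"
        by (rule coeff_formula[OF _ r]) (simp add: Psi_def)
      ultimately show "g r = g' r" using eq by simp
    qed
  qed
  have fin: "finite ?S" by (rule finite_anf_exps)
  have "card (Psi ` ?P) = card ?P" using inj by (rule card_image)
  also have "\<dots> = CARD('a) ^ (CARD('a) ^ CARD('n))"
    using fin by (simp add: card_PiE card_anf_exps)
  also have "\<dots> = CARD(('n \<Rightarrow> 'a) \<Rightarrow> 'a)"
    by (simp add: card_fun)
  finally have "Psi ` ?P = UNIV"
    by (intro card_subset_eq) auto
  then obtain g where g: "g \<in> ?P" "Psi g = (\<lambda>c. h (lincomb e c))"
    by (metis UNIV_I imageE)
  define a where "a = (\<lambda>i. if i \<in> ?S then g i else 0)"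
  have "is_anf e h a"
    unfolding is_anf_def
  proof (intro conjI allI impI)
    fix i assume "i \<notin> ?S" then show "a i = 0" by (simp add: a_def)
  next
    fix c
    have "h (lincomb e c) = Psi g c" using g(2) by metis
    also have "\<dots> = (\<Sum>i\<in>?S. a i * (\<Prod>k\<in>UNIV. c k ^ i k))"
      by (simp add: Psi_def a_def)
    finally show "h (lincomb e c) = (\<Sum>i\<in>?S. a i * (\<Prod>k\<in>UNIV. c k ^ i k))" .
  qed
  then show ?thesis by blast
qed

lemma anf_coeff_is: "is_anf e h (anf_coeff e h)"
  unfolding anf_coeff_def
  by (rule theI'[of "is_anf e h"]) (use anf_exists anf_unique in blast)

lemma lincomb_shift:
  "lincomb e (c(i := c i + 1)) = (\<lambda>k. lincomb e c k + e i k)"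
proof
  fix m
  have "(\<Sum>l\<in>UNIV. (c(i := c i + 1)) l * e l m) = (\<Sum>l\<in>UNIV. c l * e l m + (if l = i then e i m else 0))"
    by (intro sum.cong refl) (auto simp: algebra_simps)
  also have "\<dots> = (\<Sum>l\<in>UNIV. c l * e l m) + e i m"
    by (simp add: sum.distrib)
  finally show "lincomb e (c(i := c i + 1)) m = lincomb e c m + e i m"
    by (simp add: lincomb_def)
qed

lemma Wm_indep:
  fixes r :: "'n::finite \<Rightarrow> nat"
  assumes "r i = CARD('a::{field,finite}) - 1"
  shows "Wm r ((c :: 'n \<Rightarrow> 'a)(i := s)) = Wm r c"
proof -
  have q: "CARD('a) - 1 \<noteq> 0" using ff_card_ge2[where 'a='a] by linarith
  show ?thesis unfolding Wm_def
    by (intro prod.cong refl) (use assms q in \<open>auto simp: wt_def\<close>)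
qed

lemma deg_delta:
  fixes F :: "('n::finite \<Rightarrow> 'a::{field,finite}) \<Rightarrow> 'a" and e :: "'n \<Rightarrow> 'n \<Rightarrow> 'a"
  shows "deg_var e (Delta (e i) F) i < CARD('a) - 1"
proof -
  let ?h = "Delta (e i) F"
  let ?a = "anf_coeff e ?h"
  let ?S = "anf_exps TYPE('a) :: ('n \<Rightarrow> nat) set"
  have anf: "is_anf e ?h ?a" by (rule anf_coeff_is)
  have q: "CARD('a) - 1 > 0" using ff_card_ge2[where 'a='a] by linarith
  have zero: "?a r = 0" if r: "r \<in> ?S" "r i = CARD('a) - 1" for r
  proof -
    have "?a r = (\<Sum>c\<in>UNIV. ?h (lincomb e c) * Wm r c)"
      using anf r by (intro coeff_formula) (auto simp: is_anf_def)
    also have "\<dots> = (\<Sum>c\<in>UNIV. F (lincomb e (c(i := c i + 1))) * Wm r (c(i := c i + 1)))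
                   - (\<Sum>c\<in>UNIV. F (lincomb e c) * Wm r c)"
      by (simp only: lincomb_shift Wm_indep[of r i, OF r(2)]) (simp add: Delta_def algebra_simps sum_subtractf)
    also have "(\<Sum>c\<in>UNIV. F (lincomb e (c(i := c i + 1))) * Wm r (c(i := c i + 1)))
             = (\<Sum>c\<in>UNIV. F (lincomb e c) * Wm r c)"
      by (rule sum.reindex_bij_witness[of _ "\<lambda>c. c(i := c i - 1)" "\<lambda>c. c(i := c i + 1)"]) auto
    finally show ?thesis by simp
  qed
  let ?X = "{m i | m. ?a m \<noteq> 0}"
  have X: "\<forall>x\<in>?X. x < CARD('a) - 1"
  proof
    fix x assume "x \<in> ?X"
    then obtain m where m: "x = m i" "?a m \<noteq> 0" by blast
    then have "m \<in> ?S" using anf by (auto simp: is_anf_def)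
    then have "m i < CARD('a)" by (simp add: anf_exps_def)
    moreover have "m i \<noteq> CARD('a) - 1" using zero[OF \<open>m \<in> ?S\<close>] m by auto
    ultimately show "x < CARD('a) - 1" using m by linarith
  qed
  then have "?X \<subseteq> {..<CARD('a)}" by auto
  then have "finite ?X" by (rule finite_subset) simp
  then show ?thesis
    unfolding deg_var_def using X q by (subst Max_less_iff) auto
qed

theorem lemma3:
  fixes f g :: "('n::finite \<Rightarrow> 'a::{field,finite}) \<Rightarrow> 'a"
    and e :: "'n \<Rightarrow> 'n \<Rightarrow> 'a" and p :: nat and i j :: 'n
  assumes "prime p" and "CARD('a) = p" and "CARD('n) \<ge> 2"
    and "is_basis e" and "i \<noteq> j"
    and "\<forall>x. Delta (e i) f x = Delta (e j) g x"
  shows "deg_var e (Delta (e i) f) j = deg_var e (Delta (e j) g) j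
       \<and> deg_var e (Delta (e j) g) j < p - 1
       \<and> deg_var e (Delta (e j) g) i = deg_var e (Delta (e i) f) i
       \<and> deg_var e (Delta (e i) f) i < p - 1"
proof -
  have eq: "Delta (e i) f = Delta (e j) g" using assms(6) by auto
  show ?thesis using deg_delta[of e i f] deg_delta[of e j g] assms(2) eq by simp
qed

end
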